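(* Let $L\subseteq\Sigma^*$ be a regular language with $\kappa(L)=n\ge 2$. Then: 1. $\kappa({}_{\le}L)\le n$; 2. $\kappa({}_{\preceq}L)\le 2^n-1$ if $\emptyset$ is not a quotient of $L$, and $\kappa({}_{\preceq}L)\le 2^{n-1}$ if $\emptyset$ is a quotient of $L$; 3. $\kappa({}_{\sqsubseteq}L)\le 2^{n-1}$; 4. $\kappa({}_{\Subset}L)\le 2^{n-2}+1$. Moreover, the bounds are tight. For every $n\ge 2$ and every alphabet with $|\Sigma|\ge 2$: - there is a regular $L$ over $\Sigma$ with $\kappa(L)=n$ and $\kappa({}_{\le}L)=n$; - there is a regular $L$ over $\Sigma$ with $\kappa(L)=n$, without $\emptyset$ as a quotient, and with $\kappa({}_{\preceq}L)=2^n-1$; - there is a regular $L$ over $\Sigma$ with $\kappa(L)=n$, with $\emptyset$ as a quotient, and with $\kappa({}_{\preceq}L)=2^{n-1}$; - there is a regular $L$ over $\Sigma$ with $\kappa(L)=n$ and $\kappa({}_{\sqsubseteq}L)=2^{n-1}$. For every $n\ge 2$ and every alphabet with $|\Sigma|\ge \max(n-2,2)$, there is a regular $L$ over $\Sigma$ with $\kappa(L)=n$ and $\kappa({}_{\Subset}L)=2^{n-2}+1$.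
   Context: $\Sigma$ is a finite non-empty alphabet. For a language $L\subseteq\Sigma^*$ and a word $w$, the (left) quotient of $L$ by $w$ is $L_w=\{x\in\Sigma^*\mid wx\in L\}$. The quotient complexity $\kappa(L)$ is the number of distinct quotients of $L$; for regular $L$ it equals the number of states of the minimal complete DFA for $L$. We say $L$ "has $\emptyset$" if $\emptyset$ is one of its quotients. A word $u$ is a prefix (suffix, factor) of $w$ if $w=ux$ ($w=xu$, $w=xuy$) for some words $x,y$. A word $a_1\cdots a_n$ with letters $a_i$ is a subword of $w$ if $w=w_0a_1w_1\cdots a_nw_n$ for some words $w_i$, i.e. a subword is a not necessarily contiguous subsequence. We write $x\le w$, $x\preceq w$, $x\sqsubseteq w$, $x\Subset w$ for "$x$ is a prefix / suffix / factor / subword of $w$", respectively. For such a relation $\unlhd$, the $\unlhd$-closure of $L$ is ${}_{\unlhd}L=\{x\in\Sigma^*\mid x\unlhd w \text{ for some } w\in L\}$. *)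

theory Defs
  imports Main "HOL-Library.Sublist"
begin

definition quot :: "'a list set \<Rightarrow> 'a list \<Rightarrow> 'a list set" where
  "quot L w = {x. w @ x \<in> L}"

definition quotients :: "'a list set \<Rightarrow> 'a list set set" where
  "quotients L = {quot L w | w. True}"

definition kappa :: "'a list set \<Rightarrow> nat" where
  "kappa L = card (quotients L)"

definition has_empty :: "'a list set \<Rightarrow> bool" where
  "has_empty L \<longleftrightarrow> {} \<in> quotients L"

definition regular :: "'a list set \<Rightarrow> bool" where
  "regular L \<longleftrightarrow> (\<exists>(Q::nat set) q0 (\<delta>::nat \<Rightarrow> 'a \<Rightarrow> nat) F.
      finite Q \<and> q0 \<in> Q \<and> (\<forall>q\<in>Q. \<forall>a. \<delta> q a \<in> Q) \<and> F \<subseteq> Q \<and>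
      L = {w. foldl \<delta> q0 w \<in> F})"

definition closure :: "('a list \<Rightarrow> 'a list \<Rightarrow> bool) \<Rightarrow> 'a list set \<Rightarrow> 'a list set" where
  "closure R L = {x. \<exists>w\<in>L. R x w}"

definition prefix_closure :: "'a list set \<Rightarrow> 'a list set" where
  "prefix_closure L = closure prefix L"
definition suffix_closure :: "'a list set \<Rightarrow> 'a list set" where
  "suffix_closure L = closure suffix L"
definition factor_closure :: "'a list set \<Rightarrow> 'a list set" where
  "factor_closure L = closure sublist L"
definition subword_closure :: "'a list set \<Rightarrow> 'a list set" where
  "subword_closure L = closure subseq L"

end

theory Submission
  imports Defs
begin

lemma subseq_split: "subseq (x@y) w \<Longrightarrow> \<exists>w1 w2. w = w1@w2 \<and> subseq x w1 \<and> subseq y w2"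
proof (induction x arbitrary: w)
  case Nil then show ?case by (metis append_Nil list_emb_Nil)
next
  case (Cons c x)
  have "subseq (c # (x@y)) w" using Cons.prems by simp
  from list_emb_ConsD[OF this] obtain u d v where "w = u @ d # v" "c = d" "subseq (x@y) v"
    by blast
  with Cons.IH obtain v1 v2 where "v = v1@v2" "subseq x v1" "subseq y v2" by blast
  then show ?case using \<open>w = u @ d # v\<close> \<open>c = d\<close>
    by (intro exI[of _ "u @ c # v1"] exI[of _ v2]) (auto intro: subseq_drop_many)
qed

lemma quot_in: "quot L w \<in> quotients L" unfolding quotients_def by blast
lemma quot_quot: "quot (quot L u) v = quot L (u@v)" unfolding quot_def by auto
lemma quot_Nil: "quot L [] = L" unfolding quot_def by auto

definition pc :: "'a list set \<Rightarrow> 'a list set" where "pc K = {y. \<exists>v. y@v \<in> K}"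
definition sw :: "'a list set \<Rightarrow> 'a list set" where "sw K = {y. \<exists>w\<in>K. subseq y w}"
definition Tset :: "'a list set \<Rightarrow> 'a list \<Rightarrow> 'a list set set" where
  "Tset L x = {quot L (u@x) | u. True}"
definition Uset :: "'a list set \<Rightarrow> 'a list \<Rightarrow> 'a list set set" where
  "Uset L x = {quot L w1 | w1. subseq x w1}"

lemma Tset_sub: "Tset L x \<subseteq> quotients L" unfolding Tset_def using quot_in by blast
lemma Tset_ne: "Tset L x \<noteq> {}" unfolding Tset_def by blast
lemma Uset_sub: "Uset L x \<subseteq> quotients L" unfolding Uset_def using quot_in by blast

lemma quot_prefix: "quot (prefix_closure L) x = pc (quot L x)"
  unfolding prefix_closure_def closure_def quot_def pc_def prefix_def by auto

lemma quot_suffix: "quot (suffix_closure L) x = \<Union>(Tset L x)"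
  unfolding suffix_closure_def closure_def quot_def Tset_def suffix_def by auto

lemma quot_factor: "quot (factor_closure L) x = pc (\<Union>(Tset L x))"
proof -
  have a: "quot (factor_closure L) x = {y. \<exists>u v. u @ x @ y @ v \<in> L}"
    unfolding factor_closure_def closure_def quot_def sublist_def by auto
  have b: "pc (\<Union>(Tset L x)) = {y. \<exists>u v. u @ x @ y @ v \<in> L}"
    unfolding pc_def Tset_def quot_def by auto
  show ?thesis unfolding a b ..
qed

lemma quot_subword: "quot (subword_closure L) x = sw (\<Union>(Uset L x))"
proof -
  have "y \<in> quot (subword_closure L) x \<longleftrightarrow> y \<in> sw (\<Union>(Uset L x))" for y
  proof
    assume "y \<in> quot (subword_closure L) x"
    then obtain w where "w \<in> L" "subseq (x@y) w"
      unfolding subword_closure_def closure_def quot_def by auto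
    then obtain w1 w2 where "w = w1@w2" "subseq x w1" "subseq y w2" using subseq_split by blast
    then show "y \<in> sw (\<Union>(Uset L x))" unfolding sw_def Uset_def quot_def using \<open>w \<in> L\<close> by blast
  next
    assume "y \<in> sw (\<Union>(Uset L x))"
    then obtain w1 w2 where "w1@w2 \<in> L" "subseq x w1" "subseq y w2"
      unfolding sw_def Uset_def quot_def by auto
    then show "y \<in> quot (subword_closure L) x"
      unfolding subword_closure_def closure_def quot_def by (auto intro: list_emb_append_mono)
  qed
  then show ?thesis by blast
qed

lemma card_Pow_minus: "finite A \<Longrightarrow> card (Pow A - {{}}) = 2 ^ card A - 1"
  by (simp add: card_Diff_singleton card_Pow)

lemma no_empty_univ:
  assumes "\<not> has_empty L" shows "\<forall>y. \<exists>v. y@v \<in> L"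
proof
  fix y
  have "quot L y \<noteq> {}" using assms quot_in unfolding has_empty_def by metis
  then show "\<exists>v. y@v \<in> L" unfolding quot_def by auto
qed

lemma card_le_one_univ:
  assumes "\<And>x. quot M x = UNIV" shows "kappa M \<le> 1"
proof -
  have "quotients M \<subseteq> {UNIV}" using assms unfolding quotients_def by auto
  then have "card (quotients M) \<le> card {UNIV::'a list set}" by (intro card_mono) auto
  then show ?thesis unfolding kappa_def by simp
qed

lemma kappa_le_image:
  assumes "\<And>x. quot M x \<in> f ` D" "finite D" shows "kappa M \<le> card D"
proof -
  have "quotients M \<subseteq> f ` D" using assms(1) unfolding quotients_def by blast
  then have "kappa M \<le> card (f ` D)" unfolding kappa_def using assms(2) by (intro card_mono) auto
  also have "\<dots> \<le> card D" by (rule card_image_le[OF assms(2)])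
  finally show ?thesis .
qed

lemma kappa_le_image1:
  assumes "\<And>x. quot M x \<in> insert a (f ` D)" "finite D" shows "kappa M \<le> card D + 1"
proof -
  have "quotients M \<subseteq> insert a (f ` D)" using assms(1) unfolding quotients_def by blast
  then have "kappa M \<le> card (insert a (f ` D))" unfolding kappa_def using assms(2) by (intro card_mono) auto
  also have "\<dots> \<le> card (f ` D) + 1" using assms(2) by (simp add: card_insert_if)
  also have "\<dots> \<le> card D + 1" using card_image_le[OF assms(2)] by simp
  finally show ?thesis .
qed

theorem upper:
  assumes kL: "kappa L = n" and n2: "n \<ge> 2"
  shows "kappa (prefix_closure L) \<le> n \<and>
      (\<not> has_empty L \<longrightarrow> kappa (suffix_closure L) \<le> 2^n - 1) \<and>
      (has_empty L \<longrightarrow> kappa (suffix_closure L) \<le> 2^(n-1)) \<and>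
      kappa (factor_closure L) \<le> 2^(n-1) \<and>
      kappa (subword_closure L) \<le> 2^(n-2) + 1"
proof -
  define Q where "Q = quotients L"
  have cQ: "card Q = n" using kL unfolding kappa_def Q_def by simp
  then have fQ: "finite Q" using n2 card.infinite by fastforce
  have TQ: "Tset L x \<subseteq> Q" for x using Tset_sub unfolding Q_def .
  have UQ: "Uset L x \<subseteq> Q" for x using Uset_sub unfolding Q_def .
  have P1: "kappa (prefix_closure L) \<le> n"
  proof -
    have "quot (prefix_closure L) x \<in> pc ` Q" for x
      unfolding quot_prefix Q_def using quot_in by (rule imageI)
    then show ?thesis using kappa_le_image[of _ pc Q] fQ cQ by simp
  qed
  have P2: "kappa (suffix_closure L) \<le> 2^n - 1" if ne: "\<not> has_empty L"
  proof -
    have "quot (suffix_closure L) x \<in> Union ` (Pow Q - {{}})" for x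
    proof -
      have "Tset L x \<in> Pow Q - {{}}" using TQ Tset_ne by auto
      then show ?thesis unfolding quot_suffix by (rule imageI)
    qed
    then have "kappa (suffix_closure L) \<le> card (Pow Q - {{}})"
      using kappa_le_image[of _ Union "Pow Q - {{}}"] fQ by simp
    then show ?thesis using card_Pow_minus[OF fQ] cQ by simp
  qed
  have cQ1: "card (Q - {{}}) = n - 1" if "has_empty L"
    using that cQ unfolding has_empty_def Q_def by (simp add: card_Diff_singleton)
  have P3: "kappa (suffix_closure L) \<le> 2^(n-1)" if he: "has_empty L"
  proof -
    have "quot (suffix_closure L) x \<in> Union ` Pow (Q - {{}})" for x
    proof -
      have e: "\<Union>(Tset L x) = \<Union>(Tset L x - {{}})" by blast
      have "Tset L x - {{}} \<in> Pow (Q - {{}})" using TQ by auto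
      then show ?thesis unfolding quot_suffix e by (rule imageI)
    qed
    then have "kappa (suffix_closure L) \<le> card (Pow (Q - {{}}))"
      using kappa_le_image[of _ Union "Pow (Q - {{}})"] fQ by simp
    then show ?thesis using cQ1[OF he] fQ by (simp add: card_Pow)
  qed
  have P4: "kappa (factor_closure L) \<le> 2^(n-1)"
  proof (cases "has_empty L")
    case True
    have "quot (factor_closure L) x \<in> (pc \<circ> Union) ` Pow (Q - {{}})" for x
    proof -
      have e: "\<Union>(Tset L x) = \<Union>(Tset L x - {{}})" by blast
      have "Tset L x - {{}} \<in> Pow (Q - {{}})" using TQ by auto
      then have "(pc \<circ> Union) (Tset L x - {{}}) \<in> (pc \<circ> Union) ` Pow (Q - {{}})" by (rule imageI)
      then show ?thesis unfolding quot_factor e by simp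
    qed
    then have "kappa (factor_closure L) \<le> card (Pow (Q - {{}}))"
      using kappa_le_image[of _ "pc \<circ> Union" "Pow (Q - {{}})"] fQ by simp
    then show ?thesis using cQ1[OF True] fQ by (simp add: card_Pow)
  next
    case False
    note nu = no_empty_univ[OF False]
    have "quot (factor_closure L) x = UNIV" for x
    proof -
      have "y \<in> quot (factor_closure L) x" for y
      proof -
        obtain v where "(x @ y) @ v \<in> L" using nu by blast
        then have "[] @ (x@y) @ v \<in> L" by simp
        then show ?thesis unfolding factor_closure_def closure_def quot_def sublist_def by blast
      qed
      then show ?thesis by blast
    qed
    then have "kappa (factor_closure L) \<le> 1" by (rule card_le_one_univ)
    moreover have "(1::nat) \<le> 2^(n-1)" by simp
    ultimately show ?thesis by linarith
  qed
  have P5: "kappa (subword_closure L) \<le> 2^(n-2) + 1"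
  proof (cases "has_empty L")
    case True
    have eQ: "{} \<in> Q" using True unfolding has_empty_def Q_def .
    have LQ: "L \<in> Q" using quot_in[of L "[]"] unfolding Q_def quot_Nil .
    have Lne: "L \<noteq> {}"
    proof
      assume "L = {}"
      then have "Q = {{}}" unfolding Q_def quotients_def quot_def by auto
      then show False using cQ n2 by simp
    qed
    have sub: "{{}, L} \<subseteq> Q" using eQ LQ by simp
    have "card (Q - {{}, L}) = card Q - card {{}, L}" by (rule card_Diff_subset) (use sub fQ in auto)
    then have cQ2: "card (Q - {{}, L}) = n - 2" using cQ Lne by simp
    have memW: "quot (subword_closure L) x \<in> insert (subword_closure L) ((sw \<circ> Union) ` Pow (Q - {{}, L}))" for x
    proof (cases "L \<in> Uset L x")
      case True
      have "quot (subword_closure L) x = subword_closure L"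
      proof
        show "quot (subword_closure L) x \<subseteq> subword_closure L"
        proof
          fix y assume "y \<in> quot (subword_closure L) x"
          then obtain w where w: "w \<in> L" "subseq (x@y) w"
            unfolding subword_closure_def closure_def quot_def by auto
          have "subseq y (x@y)" by (rule subseq_drop_many) simp
          then have "subseq y w" using w(2) by (rule subseq_order.order_trans)
          then show "y \<in> subword_closure L" using w(1) unfolding subword_closure_def closure_def by blast
        qed
      next
        show "subword_closure L \<subseteq> quot (subword_closure L) x"
          unfolding quot_subword using True unfolding subword_closure_def closure_def sw_def by auto
      qed
      then show ?thesis by simp
    next
      case False
      have e: "\<Union>(Uset L x) = \<Union>(Uset L x - {{}, L})" using False by blast
      have "Uset L x - {{}, L} \<in> Pow (Q - {{}, L})" using UQ by auto
      then have "(sw \<circ> Union) (Uset L x - {{}, L}) \<in> (sw \<circ> Union) ` Pow (Q - {{}, L})" by (rule imageI)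
      then show ?thesis unfolding quot_subword e by simp
    qed
    have "kappa (subword_closure L) \<le> card (Pow (Q - {{}, L})) + 1"
      by (rule kappa_le_image1[OF memW]) (simp add: fQ)
    then show ?thesis using cQ2 fQ by (simp add: card_Pow)
  next
    case False
    note nu = no_empty_univ[OF False]
    have "quot (subword_closure L) x = UNIV" for x
    proof -
      have "y \<in> quot (subword_closure L) x" for y
      proof -
        obtain v where v: "(x @ y) @ v \<in> L" using nu by blast
        have "subseq (x@y) ((x @ y) @ v)" by (rule subseq_rev_drop_many) simp
        then show ?thesis using v unfolding subword_closure_def closure_def quot_def by blast
      qed
      then show ?thesis by blast
    qed
    then have "kappa (subword_closure L) \<le> 1" by (rule card_le_one_univ)
    then show ?thesis by simp
  qed
  show ?thesis using P1 P2 P3 P4 P5 by blast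
qed



lemma kappa_eq_image:
  assumes "quotients M = f ` D" "inj_on f D" shows "kappa M = card D"
  unfolding kappa_def assms(1) using card_image[OF assms(2)] .

lemma inj_union:
  assumes "\<And>i. i \<in> A \<Longrightarrow> \<exists>y. \<forall>q\<in>A. P q y \<longleftrightarrow> q = i"
  shows "inj_on (\<lambda>T. {y. \<exists>q\<in>T. P q y}) (Pow A)"
proof (rule inj_onI)
  fix T T' assume T: "T \<in> Pow A" and T': "T' \<in> Pow A"
    and eq: "{y. \<exists>q\<in>T. P q y} = {y. \<exists>q\<in>T'. P q y}"
  have *: "i \<in> T'" if h: "i \<in> T" "T \<subseteq> A" "T' \<subseteq> A" "{y. \<exists>q\<in>T. P q y} = {y. \<exists>q\<in>T'. P q y}" for i T T'
  proof -
    have "i \<in> A" using h by blast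
    then obtain y where y: "\<forall>q\<in>A. P q y \<longleftrightarrow> q = i" using assms by blast
    have "y \<in> {y. \<exists>q\<in>T. P q y}" using h y by blast
    then obtain q where "q \<in> T'" "P q y" using h(4) by blast
    moreover have "q \<in> A" using h(3) \<open>q \<in> T'\<close> by (rule subsetD)
    ultimately show ?thesis using y by auto
  qed
  show "T = T'" using *[of _ T T'] *[of _ T' T] T T' eq by blast
qed

lemma regular_if_finite:
  assumes fin: "finite (quotients L)" shows "regular L"
proof -
  define Qs where "Qs = quotients L"
  define k where "k = card Qs"
  have finQ: "finite Qs" using fin unfolding Qs_def .
  from ex_bij_betw_nat_finite[OF finQ] obtain h where h: "bij_betw h {0..<k} Qs" unfolding k_def ..
  define g where "g = the_inv_into {0..<k} h"
  have g: "bij_betw g Qs {0..<k}" unfolding g_def by (rule bij_betw_the_inv_into[OF h])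
  have hg: "h (g K) = K" if "K \<in> Qs" for K unfolding g_def by (rule f_the_inv_into_f_bij_betw[OF h that])
  have gQ: "g K \<in> {0..<k}" if "K \<in> Qs" for K by (rule bspec[OF bij_betwE[OF g] that])
  have hQ: "h q \<in> Qs" if "q \<in> {0..<k}" for q by (rule bspec[OF bij_betwE[OF h] that])
  have stepQ: "quot K [c] \<in> Qs" if "K \<in> Qs" for K c
  proof -
    from that obtain u where "K = quot L u" unfolding Qs_def quotients_def by auto
    then have "quot K [c] = quot L (u@[c])" by (simp add: quot_quot)
    then show ?thesis unfolding Qs_def by (simp add: quot_in)
  qed
  define d where "d q c = g (quot (h q) [c])" for q c
  define F where "F = {q \<in> {0..<k}. [] \<in> h q}"
  have inv: "foldl d q w \<in> {0..<k} \<and> h (foldl d q w) = quot (h q) w" if "q \<in> {0..<k}" for q w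
    using that
  proof (induction w arbitrary: q)
    case Nil then show ?case by (simp add: quot_Nil)
  next
    case (Cons c w)
    have "h q \<in> Qs" using hQ Cons.prems .
    then have q1: "quot (h q) [c] \<in> Qs" by (rule stepQ)
    have dq: "d q c \<in> {0..<k}" unfolding d_def using gQ[OF q1] .
    have hd: "h (d q c) = quot (h q) [c]" unfolding d_def using hg[OF q1] .
    have "foldl d q (c#w) = foldl d (d q c) w" by simp
    then show ?case using Cons.IH[OF dq] hd by (simp add: quot_quot)
  qed
  have LQ: "L \<in> Qs" unfolding Qs_def using quot_in[of L "[]"] by (simp add: quot_Nil)
  define q0 where "q0 = g L"
  have q0: "q0 \<in> {0..<k}" "h q0 = L" unfolding q0_def using gQ[OF LQ] hg[OF LQ] by auto
  have Leq: "L = {w. foldl d q0 w \<in> F}"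
  proof -
    have "w \<in> L \<longleftrightarrow> foldl d q0 w \<in> F" for w
    proof -
      have "foldl d q0 w \<in> {0..<k}" "h (foldl d q0 w) = quot L w" using inv[OF q0(1), of w] q0(2) by auto
      then show ?thesis unfolding F_def quot_def by auto
    qed
    then show ?thesis by auto
  qed
  have cl: "\<forall>q\<in>{0..<k}. \<forall>c. d q c \<in> {0..<k}"
  proof (intro ballI allI)
    fix q c assume "q \<in> {0..<k}"
    from inv[OF this, of "[c]"] show "d q c \<in> {0..<k}" by simp
  qed
  have FQ: "F \<subseteq> {0..<k}" unfolding F_def by auto
  show ?thesis unfolding regular_def
    by (rule exI[of _ "{0..<k}"], rule exI[of _ q0], rule exI[of _ d], rule exI[of _ F]) (use q0 cl FQ Leq in auto)
qed

lemma quotients_eqI: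
  assumes "\<And>x. quot M x \<in> f ` D" "\<And>T. T \<in> D \<Longrightarrow> f T \<in> quotients M"
  shows "quotients M = f ` D"
proof
  show "quotients M \<subseteq> f ` D"
  proof
    fix K assume "K \<in> quotients M"
    then obtain w where "K = quot M w" unfolding quotients_def by auto
    then show "K \<in> f ` D" using assms(1) by simp
  qed
  show "f ` D \<subseteq> quotients M"
  proof
    fix K assume "K \<in> f ` D"
    then obtain T where "T \<in> D" "K = f T" by auto
    then show "K \<in> quotients M" using assms(2) by simp
  qed
qed

lemma quot_lang: "quot {w. foldl d q w \<in> F} u = {w. foldl d (foldl d q u) w \<in> F}"
  unfolding quot_def by simp

lemma foldl_closed: "p \<in> Q \<Longrightarrow> (\<forall>p\<in>Q. \<forall>c. d p c \<in> Q) \<Longrightarrow> foldl d p w \<in> Q"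
  by (induction w arbitrary: p) auto

lemma regular_dfa:
  assumes "finite (Q::nat set)" "q \<in> Q" "\<forall>p\<in>Q. \<forall>c. d p c \<in> Q" "F \<subseteq> Q"
  shows "regular {w. foldl d q w \<in> F}"
  unfolding regular_def
  by (rule exI[of _ Q], rule exI[of _ q], rule exI[of _ d], rule exI[of _ F]) (use assms in simp)

lemma quotients_dfa:
  assumes "q0 \<in> Q" "\<forall>p\<in>Q. \<forall>c. d p c \<in> Q" "\<forall>p\<in>Q. \<exists>u. foldl d q0 u = p"
  shows "quotients {w. foldl d q0 w \<in> F} = (\<lambda>p. {w. foldl d p w \<in> F}) ` Q"
proof -
  have "quot {w. foldl d q0 w \<in> F} u \<in> (\<lambda>p. {w. foldl d p w \<in> F}) ` Q" for u
  proof -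
    have "foldl d q0 u \<in> Q" using foldl_closed[OF assms(1,2)] .
    then show ?thesis unfolding quot_lang by (rule imageI)
  qed
  moreover have "{w. foldl d p w \<in> F} \<in> quotients {w. foldl d q0 w \<in> F}" if "p \<in> Q" for p
  proof -
    from bspec[OF assms(3) that] obtain u where "foldl d q0 u = p" ..
    then show ?thesis using quot_in[of "{w. foldl d q0 w \<in> F}" u] unfolding quot_lang by simp
  qed
  ultimately show ?thesis unfolding quotients_def by blast
qed


lemma quot_suffix_eq: "quot (suffix_closure L) x = {y. \<exists>u. u @ x @ y \<in> L}"
  unfolding suffix_closure_def closure_def quot_def suffix_def by auto

lemma quot_factor_eq: "quot (factor_closure L) x = {y. \<exists>u v. u @ x @ y @ v \<in> L}"
  unfolding factor_closure_def closure_def quot_def sublist_def by auto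

definition d2 :: "'a \<Rightarrow> nat \<Rightarrow> nat \<Rightarrow> 'a \<Rightarrow> nat" where
  "d2 a m q c = (if m \<le> q then m else if c = a then Suc q mod m else if q = 0 then m else q)"

lemma modh:
  assumes "q < (m::nat)" "j < m"
  shows "(q + (m-j) mod m) mod m = (if j \<le> q then q - j else q + m - j)"
proof (cases "j = 0")
  case True then show ?thesis using assms by simp
next
  case False
  then have e: "(m-j) mod m = m - j" using assms by simp
  show ?thesis
  proof (cases "j \<le> q")
    case True
    have "(q + (m - j)) mod m = (q + (m-j) - m) mod m" using True assms by (intro le_mod_geq) simp
    also have "q + (m-j) - m = q - j" using True assms by simp
    also have "(q - j) mod m = q - j" using assms by simp
    finally show ?thesis unfolding e using True by simp
  next
    case False
    then show ?thesis unfolding e using assms by simp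
  qed
qed

locale sinkaut =
  fixes a b :: 'a and m :: nat
  assumes ab: "a \<noteq> b" and m1: "1 \<le> m"
begin

abbreviation "d \<equiv> d2 a m"

lemma d_le: "q \<le> m \<Longrightarrow> d q c \<le> m"
  unfolding d2_def using m1 by auto

lemma foldl_le: "q \<le> m \<Longrightarrow> foldl d q w \<le> m"
  using foldl_closed[of q "{..m}" d w] d_le by auto

lemma sink: "foldl d m w = m"
  by (induction w) (simp_all add: d2_def)

lemma rot: "q < m \<Longrightarrow> foldl d q (replicate k a) = (q + k) mod m"
proof (induction k arbitrary: q)
  case 0 then show ?case by simp
next
  case (Suc k)
  have "d q a = Suc q mod m" using Suc.prems unfolding d2_def by simp
  moreover have "Suc q mod m < m" using m1 by simp
  ultimately have "foldl d q (replicate (Suc k) a) = (Suc q mod m + k) mod m"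
    using Suc.IH by simp
  also have "\<dots> = (q + Suc k) mod m" by (simp add: mod_add_left_eq)
  finally show ?case .
qed

definition hit :: "nat \<Rightarrow> 'a list" where "hit p = replicate ((m-p) mod m) a"

lemma hit: "q < m \<Longrightarrow> p < m \<Longrightarrow> foldl d q (hit p) = 0 \<longleftrightarrow> q = p"
  unfolding hit_def using rot modh by auto

lemma hit_lt: "q < m \<Longrightarrow> foldl d q (hit p) < m"
  unfolding hit_def using rot m1 by simp

definition kw :: "nat \<Rightarrow> 'a list" where
  "kw j = replicate ((m-j) mod m) a @ b # replicate j a"

lemma kill: assumes "q < m" "j < m" shows "foldl d q (kw j) = (if q = j then m else q)"
proof -
  define r where "r = (if j \<le> q then q - j else q + m - j)"
  have r: "foldl d q (replicate ((m-j) mod m) a) = r" unfolding r_def using rot modh assms by simp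
  have rm: "r < m" unfolding r_def using assms by auto
  show ?thesis
  proof (cases "q = j")
    case True
    then have "r = 0" unfolding r_def by simp
    then have "d r b = m" unfolding d2_def using ab m1 by auto
    then show ?thesis unfolding kw_def using r True by (simp add: sink)
  next
    case False
    then have "r \<noteq> 0" unfolding r_def using assms by auto
    then have "d r b = r" unfolding d2_def using ab rm by auto
    moreover have "(r + j) mod m = q" unfolding r_def using assms by auto
    ultimately show ?thesis unfolding kw_def using r rot[OF rm, of j] False by simp
  qed
qed

lemma killset:
  assumes "D \<subseteq> {..<m}"
  shows "\<exists>x. \<forall>q<m. foldl d q x = (if q \<in> D then m else q)"
proof -
  have "finite D" using assms finite_subset by blast
  then show ?thesis using assms
  proof (induction D rule: finite_induct)
    case empty
    show ?case by (rule exI[of _ "[]"]) simp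
  next
    case (insert j D)
    from insert.IH insert.prems obtain x where x: "\<forall>q<m. foldl d q x = (if q \<in> D then m else q)" by auto
    have jm: "j < m" using insert.prems by auto
    have "\<forall>q<m. foldl d q (x @ kw j) = (if q \<in> insert j D then m else q)"
    proof (intro allI impI)
      fix q assume qm: "q < m"
      show "foldl d q (x @ kw j) = (if q \<in> insert j D then m else q)"
      proof (cases "q \<in> D")
        case True then show ?thesis using x qm by (simp add: sink)
      next
        case False then show ?thesis using x qm kill[OF qm jm] by simp
      qed
    qed
    then show ?case by (rule exI)
  qed
qed

lemma sel: assumes "i < m" shows "\<exists>x. \<forall>q<m. foldl d q x = (if q = i then q else m)"
proof -
  obtain x where "\<forall>q<m. foldl d q x = (if q \<in> {..<m} - {i} then m else q)" using killset[of "{..<m} - {i}"] by auto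
  then show ?thesis by (intro exI[of _ x]) auto
qed

definition L2 :: "'a list set" where "L2 = {w. foldl d 0 w \<in> {0}}"

lemma reach: "p \<le> m \<Longrightarrow> \<exists>u. foldl d 0 u = p"
proof -
  assume p: "p \<le> m"
  show ?thesis
  proof (cases "p = m")
    case True
    have "d 0 b = m" unfolding d2_def using ab m1 by auto
    then show ?thesis using True by (intro exI[of _ "[b]"]) simp
  next
    case False
    then have "p < m" using p by simp
    then show ?thesis using rot[of 0 p] m1 by (intro exI[of _ "replicate p a"]) simp
  qed
qed

lemma L2_regular: "regular L2"
  unfolding L2_def by (rule regular_dfa[of "{..m}"]) (auto intro: d_le)

lemma L2_quotients: "quotients L2 = (\<lambda>p. {w. foldl d p w \<in> {0}}) ` {..m}"
  unfolding L2_def by (rule quotients_dfa) (auto intro: d_le reach)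

lemma L2_inj: "inj_on (\<lambda>p. {w. foldl d p w \<in> {0}}) {..m}"
proof (rule inj_onI)
  fix p q assume p: "p \<in> {..m}" and q: "q \<in> {..m}" and eq: "{w. foldl d p w \<in> {0}} = {w. foldl d q w \<in> {0}}"
  have *: "p = q" if "p < m" "q \<le> m" "{w. foldl d p w \<in> {0}} = {w. foldl d q w \<in> {0}}" for p q
  proof -
    have A: "hit p \<in> {w. foldl d p w \<in> {0}}" using hit[OF that(1) that(1)] by simp
    have "hit p \<in> {w. foldl d q w \<in> {0}}" using A unfolding that(3) .
    then have h: "foldl d q (hit p) = 0" by simp
    have "q \<noteq> m" using h sink m1 by (metis not_one_le_zero)
    then have "q < m" using that(2) by simp
    then show "p = q" using hit[OF _ that(1)] h by simp
  qed
  show "p = q"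
  proof (cases "p < m")
    case True then show ?thesis using * q eq by simp
  next
    case False
    show ?thesis
    proof (cases "q < m")
      case True then show ?thesis using *[of q p] p eq by simp
    next
      case False then show ?thesis using \<open>\<not> p < m\<close> p q by simp
    qed
  qed
qed

lemma L2_kappa: "kappa L2 = Suc m"
  using kappa_eq_image[OF L2_quotients L2_inj] by simp

lemma L2_has_empty: "has_empty L2"
proof -
  have e: "{w. foldl d m w \<in> {0}} = {}" using sink m1 by auto
  have mem: "{w. foldl d m w \<in> {0}} \<in> quotients L2" unfolding L2_quotients by simp
  show ?thesis unfolding has_empty_def using mem unfolding e .
qed

lemma sink_quotients:
  assumes Mx: "\<And>x. quot M x = {y. \<exists>p\<le>m. R (foldl d (foldl d p x) y)}" and Rm: "\<And>y. \<not> R (foldl d m y)"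
  shows "quotients M = (\<lambda>T. {y. \<exists>q\<in>T. R (foldl d q y)}) ` Pow {..<m}"
proof -
  have "quot M x \<in> (\<lambda>T. {y. \<exists>q\<in>T. R (foldl d q y)}) ` Pow {..<m}" for x
  proof -
    define T where "T = {q. q < m \<and> (\<exists>p\<le>m. foldl d p x = q)}"
    have "quot M x = {y. \<exists>q\<in>T. R (foldl d q y)}"
    proof -
      have "(\<exists>p\<le>m. R (foldl d (foldl d p x) y)) \<longleftrightarrow> (\<exists>q\<in>T. R (foldl d q y))" for y
      proof
        assume "\<exists>p\<le>m. R (foldl d (foldl d p x) y)"
        then obtain p where p: "p \<le> m" "R (foldl d (foldl d p x) y)" by blast
        have "foldl d p x \<noteq> m" using p(2) Rm by metis
        then have lt: "foldl d p x < m" using foldl_le[OF p(1), of x] by simp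
        have "foldl d p x \<in> T" unfolding T_def using lt p(1) by auto
        then show "\<exists>q\<in>T. R (foldl d q y)" using p(2) by blast
      next
        assume "\<exists>q\<in>T. R (foldl d q y)"
        then obtain q where q: "q \<in> T" "R (foldl d q y)" by blast
        from q(1) obtain p where "p \<le> m" "foldl d p x = q" unfolding T_def by blast
        then show "\<exists>p\<le>m. R (foldl d (foldl d p x) y)" using q(2) by auto
      qed
      then show ?thesis unfolding Mx by simp
    qed
    moreover have "T \<in> Pow {..<m}" unfolding T_def by auto
    ultimately show ?thesis by simp
  qed
  moreover have "{y. \<exists>q\<in>T. R (foldl d q y)} \<in> quotients M" if "T \<in> Pow {..<m}" for T
  proof -
    obtain x where x: "\<forall>q<m. foldl d q x = (if q \<in> {..<m} - T then m else q)"
      using killset[of "{..<m} - T"] by auto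
    have "(\<exists>p\<le>m. R (foldl d (foldl d p x) y)) \<longleftrightarrow> (\<exists>q\<in>T. R (foldl d q y))" for y
    proof
      assume "\<exists>p\<le>m. R (foldl d (foldl d p x) y)"
      then obtain p where p: "p \<le> m" "R (foldl d (foldl d p x) y)" by blast
      show "\<exists>q\<in>T. R (foldl d q y)"
      proof (cases "p < m")
        case True
        then have "p \<in> T" using x p(2) Rm by (metis Diff_iff lessThan_iff)
        moreover have "foldl d p x = p" using x True \<open>p \<in> T\<close> by simp
        ultimately show ?thesis using p(2) by auto
      next
        case False
        then have "p = m" using p(1) by simp
        then show ?thesis using p(2) Rm by (simp add: sink)
      qed
    next
      assume "\<exists>q\<in>T. R (foldl d q y)"
      then obtain q where q: "q \<in> T" "R (foldl d q y)" by blast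
      have "q < m" using q(1) that by auto
      then have "foldl d q x = q" using x q(1) by simp
      then show "\<exists>p\<le>m. R (foldl d (foldl d p x) y)" using q(2) \<open>q < m\<close>
        by (intro exI[of _ q]) simp
    qed
    then have "quot M x = {y. \<exists>q\<in>T. R (foldl d q y)}" unfolding Mx by simp
    then show ?thesis using quot_in[of M x] by simp
  qed
  ultimately show ?thesis unfolding quotients_def by blast
qed

lemma L2_suffix: "kappa (suffix_closure L2) = 2 ^ m"
proof -
  have Mx: "quot (suffix_closure L2) x = {y. \<exists>p\<le>m. (\<lambda>r. r = 0) (foldl d (foldl d p x) y)}" for x
  proof -
    have "(\<exists>u. u @ x @ y \<in> L2) \<longleftrightarrow> (\<exists>p\<le>m. foldl d (foldl d p x) y = 0)" for y
    proof
      assume "\<exists>u. u @ x @ y \<in> L2"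
      then obtain u where "foldl d (foldl d (foldl d 0 u) x) y = 0" unfolding L2_def by auto
      moreover have "foldl d 0 u \<le> m" using foldl_le by simp
      ultimately show "\<exists>p\<le>m. foldl d (foldl d p x) y = 0" by blast
    next
      assume "\<exists>p\<le>m. foldl d (foldl d p x) y = 0"
      then obtain p where p: "p \<le> m" "foldl d (foldl d p x) y = 0" by blast
      from reach[OF p(1)] obtain u where "foldl d 0 u = p" ..
      then have "u @ x @ y \<in> L2" unfolding L2_def using p(2) by simp
      then show "\<exists>u. u @ x @ y \<in> L2" ..
    qed
    then show ?thesis unfolding quot_suffix_eq by simp
  qed
  have Rm: "\<not> (\<lambda>r. r = 0) (foldl d m y)" for y using sink m1 by simp
  have Q: "quotients (suffix_closure L2) = (\<lambda>T. {y. \<exists>q\<in>T. (\<lambda>r. r = 0) (foldl d q y)}) ` Pow {..<m}"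
    by (rule sink_quotients[OF Mx Rm])
  have I: "inj_on (\<lambda>T. {y. \<exists>q\<in>T. (\<lambda>r. r = 0) (foldl d q y)}) (Pow {..<m})"
  proof (rule inj_union)
    fix i assume i: "i \<in> {..<m}"
    then obtain x where x: "\<forall>q<m. foldl d q x = (if q = i then q else m)" using sel by auto
    have "\<forall>q\<in>{..<m}. foldl d q (x @ hit i) = 0 \<longleftrightarrow> q = i"
    proof
      fix q assume "q \<in> {..<m}"
      then show "foldl d q (x @ hit i) = 0 \<longleftrightarrow> q = i"
        using x hit[of i i] i sink m1 by auto
    qed
    then show "\<exists>y. \<forall>q\<in>{..<m}. (\<lambda>r. r = 0) (foldl d q y) \<longleftrightarrow> q = i" by blast
  qed
  show ?thesis using kappa_eq_image[OF Q I] by (simp add: card_Pow)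
qed

lemma L2_factor: "kappa (factor_closure L2) = 2 ^ m"
proof -
  have ex0: "(\<exists>v. foldl d r v = 0) \<longleftrightarrow> r < m" if "r \<le> m" for r
  proof
    assume "\<exists>v. foldl d r v = 0"
    then obtain v where "foldl d r v = 0" ..
    then show "r < m" using that sink m1 by (metis le_neq_implies_less not_one_le_zero)
  next
    assume "r < m"
    then show "\<exists>v. foldl d r v = 0" using hit[of r r] by blast
  qed
  have Mx: "quot (factor_closure L2) x = {y. \<exists>p\<le>m. (\<lambda>r. r < m) (foldl d (foldl d p x) y)}" for x
  proof -
    have "(\<exists>u v. u @ x @ y @ v \<in> L2) \<longleftrightarrow> (\<exists>p\<le>m. foldl d (foldl d p x) y < m)" for y
    proof
      assume "\<exists>u v. u @ x @ y @ v \<in> L2"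
      then obtain u v where uv: "foldl d (foldl d (foldl d (foldl d 0 u) x) y) v = 0" unfolding L2_def by auto
      have p: "foldl d 0 u \<le> m" using foldl_le by simp
      have "foldl d (foldl d (foldl d 0 u) x) y < m"
        using ex0[OF foldl_le[OF foldl_le[OF p]]] uv by blast
      then show "\<exists>p\<le>m. foldl d (foldl d p x) y < m" using p by blast
    next
      assume "\<exists>p\<le>m. foldl d (foldl d p x) y < m"
      then obtain p where p: "p \<le> m" "foldl d (foldl d p x) y < m" by blast
      from ex0[OF foldl_le[OF foldl_le[OF p(1)]]] p(2) obtain v where v: "foldl d (foldl d (foldl d p x) y) v = 0" by blast
      from reach[OF p(1)] obtain u where "foldl d 0 u = p" ..
      then have "u @ x @ y @ v \<in> L2" unfolding L2_def using v by simp
      then show "\<exists>u v. u @ x @ y @ v \<in> L2" by blast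
    qed
    then show ?thesis unfolding quot_factor_eq by simp
  qed
  have Rm: "\<not> (\<lambda>r. r < m) (foldl d m y)" for y using sink by simp
  have Q: "quotients (factor_closure L2) = (\<lambda>T. {y. \<exists>q\<in>T. (\<lambda>r. r < m) (foldl d q y)}) ` Pow {..<m}"
    by (rule sink_quotients[OF Mx Rm])
  have I: "inj_on (\<lambda>T. {y. \<exists>q\<in>T. (\<lambda>r. r < m) (foldl d q y)}) (Pow {..<m})"
  proof (rule inj_union)
    fix i assume i: "i \<in> {..<m}"
    then obtain x where x: "\<forall>q<m. foldl d q x = (if q = i then q else m)" using sel by auto
    have "\<forall>q\<in>{..<m}. foldl d q x < m \<longleftrightarrow> q = i"
    proof
      fix q assume "q \<in> {..<m}"
      then show "foldl d q x < m \<longleftrightarrow> q = i" using x i by auto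
    qed
    then show "\<exists>y. \<forall>q\<in>{..<m}. (\<lambda>r. r < m) (foldl d q y) \<longleftrightarrow> q = i" by blast
  qed
  show ?thesis using kappa_eq_image[OF Q I] by (simp add: card_Pow)
qed

end


definition d1 :: "'a \<Rightarrow> nat \<Rightarrow> nat \<Rightarrow> 'a \<Rightarrow> nat" where
  "d1 a N q c = (if c = a then Suc q mod N else if q = 0 then 1 else q)"

locale cycaut =
  fixes a b :: 'a and N :: nat
  assumes ab: "a \<noteq> b" and N2: "2 \<le> N"
begin

abbreviation "d \<equiv> d1 a N"

lemma d_lt: "q < N \<Longrightarrow> d q c < N"
  unfolding d1_def using N2 by auto

lemma foldl_lt: "q < N \<Longrightarrow> foldl d q w < N"
  using foldl_closed[of q "{..<N}" d w] d_lt by auto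

lemma rot: "q < N \<Longrightarrow> foldl d q (replicate k a) = (q + k) mod N"
proof (induction k arbitrary: q)
  case 0 then show ?case by simp
next
  case (Suc k)
  have "d q a = Suc q mod N" unfolding d1_def by simp
  moreover have "Suc q mod N < N" using N2 by simp
  ultimately have "foldl d q (replicate (Suc k) a) = (Suc q mod N + k) mod N"
    using Suc.IH by simp
  also have "\<dots> = (q + Suc k) mod N" by (simp add: mod_add_left_eq)
  finally show ?case .
qed

definition hit :: "nat \<Rightarrow> 'a list" where "hit p = replicate ((N-p) mod N) a"

lemma hit: "q < N \<Longrightarrow> p < N \<Longrightarrow> foldl d q (hit p) = 0 \<longleftrightarrow> q = p"
  unfolding hit_def using rot modh by auto

definition ew :: "nat \<Rightarrow> 'a list" where
  "ew j = replicate ((N-j) mod N) a @ b # replicate j a"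

lemma merge: assumes "q < N" "j < N" shows "foldl d q (ew j) = (if q = j then Suc j mod N else q)"
proof -
  define r where "r = (if j \<le> q then q - j else q + N - j)"
  have r: "foldl d q (replicate ((N-j) mod N) a) = r" unfolding r_def using rot modh assms by simp
  have rm: "r < N" unfolding r_def using assms by auto
  show ?thesis
  proof (cases "q = j")
    case True
    then have "r = 0" unfolding r_def by simp
    then have "d r b = 1" unfolding d1_def using ab by auto
    moreover have "(1::nat) < N" using N2 by simp
    ultimately show ?thesis using r True rot[of 1 j] by (simp add: ew_def)
  next
    case False
    then have "r \<noteq> 0" unfolding r_def using assms by auto
    then have "d r b = r" unfolding d1_def using ab rm by auto
    moreover have "(r + j) mod N = q" unfolding r_def using assms by auto
    ultimately show ?thesis unfolding ew_def using r rot[OF rm, of j] False by simp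
  qed
qed

definition Img :: "'a list \<Rightarrow> nat set" where "Img x = (\<lambda>p. foldl d p x) ` {..<N}"

lemma Img_append: "Img (x @ y) = (\<lambda>p. foldl d p y) ` Img x"
  unfolding Img_def by (simp add: image_image)

lemma exists_gap:
  assumes S: "S \<subseteq> {..<N}" "S \<noteq> {}" "S \<noteq> {..<N}"
  shows "\<exists>j<N. j \<notin> S \<and> Suc j mod N \<in> S"
proof (rule ccontr)
  assume H: "\<not> (\<exists>j<N. j \<notin> S \<and> Suc j mod N \<in> S)"
  obtain t where t: "t < N" "t \<notin> S" using S by auto
  have all: "(t + k) mod N \<notin> S" for k
  proof (induction k)
    case 0 then show ?case using t by simp
  next
    case (Suc k)
    have "(t + k) mod N < N" using N2 by simp
    then have "Suc ((t + k) mod N) mod N \<notin> S" using H Suc.IH by blast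
    then show ?case by (simp add: mod_Suc_eq)
  qed
  obtain s where s: "s \<in> S" using S by auto
  then have "s < N" using S by auto
  then have "(t + (s + N - t)) mod N = s" using t by simp
  then show False using all[of "s + N - t"] s by simp
qed

lemma reach_all:
  "\<forall>S. S \<subseteq> {..<N} \<and> S \<noteq> {} \<and> card ({..<N} - S) = k \<longrightarrow> (\<exists>x. Img x = S)"
proof (induction k)
  case 0
  show ?case
  proof (intro allI impI)
    fix S assume H: "S \<subseteq> {..<N} \<and> S \<noteq> {} \<and> card ({..<N} - S) = 0"
    then have "{..<N} - S = {}" by simp
    then have "S = {..<N}" using H by auto
    then have "Img [] = S" unfolding Img_def by simp
    then show "\<exists>x. Img x = S" ..
  qed
next
  case (Suc k)
  show ?case
  proof (intro allI impI)
    fix S assume H: "S \<subseteq> {..<N} \<and> S \<noteq> {} \<and> card ({..<N} - S) = Suc k"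
    then have "S \<noteq> {..<N}" by auto
    have "\<exists>j<N. j \<notin> S \<and> Suc j mod N \<in> S" by (rule exists_gap) (use H \<open>S \<noteq> {..<N}\<close> in auto)
    then obtain j where j: "j < N" "j \<notin> S" "Suc j mod N \<in> S" by blast
    have e: "{..<N} - insert j S = ({..<N} - S) - {j}" by auto
    have "card ({..<N} - insert j S) = k" unfolding e using H j by (simp add: card_Diff_singleton)
    moreover have "insert j S \<subseteq> {..<N}" "insert j S \<noteq> {}" using H j by auto
    ultimately have "\<exists>x. Img x = insert j S" using Suc.IH[rule_format, of "insert j S"] by simp
    then obtain x where x: "Img x = insert j S" ..
    have "Img (x @ ew j) = S"
    proof -
      have "Img (x @ ew j) = (\<lambda>p. foldl d p (ew j)) ` insert j S" unfolding Img_append x ..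
      also have "\<dots> = insert (Suc j mod N) S"
      proof -
        have fS: "\<forall>q\<in>S. foldl d q (ew j) = q"
        proof
          fix q assume qS: "q \<in> S"
          then have "q < N" "q \<noteq> j" using H j by auto
          then show "foldl d q (ew j) = q" using merge[OF \<open>q < N\<close> j(1)] by simp
        qed
        have "(\<lambda>p. foldl d p (ew j)) ` S = S"
        proof
          show "(\<lambda>p. foldl d p (ew j)) ` S \<subseteq> S" using fS by auto
          show "S \<subseteq> (\<lambda>p. foldl d p (ew j)) ` S"
          proof
            fix q assume "q \<in> S"
            then have "foldl d q (ew j) = q" using fS by blast
            then show "q \<in> (\<lambda>p. foldl d p (ew j)) ` S" using \<open>q \<in> S\<close> by (metis imageI)
          qed
        qed
        moreover have "foldl d j (ew j) = Suc j mod N" using merge j by simp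
        ultimately show ?thesis by simp
      qed
      also have "\<dots> = S" using j by auto
      finally show ?thesis .
    qed
    then show "\<exists>x. Img x = S" ..
  qed
qed

lemma reach_set: "S \<subseteq> {..<N} \<Longrightarrow> S \<noteq> {} \<Longrightarrow> \<exists>x. Img x = S"
  using reach_all[rule_format, of S "card ({..<N} - S)"] by simp

definition L1 :: "'a list set" where "L1 = {w. foldl d 0 w \<in> {0}}"

lemma L1_regular: "regular L1"
  unfolding L1_def by (rule regular_dfa[of "{..<N}"]) (use N2 d_lt in auto)

lemma reach: "p < N \<Longrightarrow> \<exists>u. foldl d 0 u = p"
  using rot[of 0 p] N2 by (intro exI[of _ "replicate p a"]) simp

lemma L1_quotients: "quotients L1 = (\<lambda>p. {w. foldl d p w \<in> {0}}) ` {..<N}"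
  unfolding L1_def by (rule quotients_dfa) (use N2 d_lt reach in auto)

lemma L1_inj: "inj_on (\<lambda>p. {w. foldl d p w \<in> {0}}) {..<N}"
proof (rule inj_onI)
  fix p q assume p: "p \<in> {..<N}" and q: "q \<in> {..<N}" and eq: "{w. foldl d p w \<in> {0}} = {w. foldl d q w \<in> {0}}"
  have A: "hit p \<in> {w. foldl d p w \<in> {0}}" using hit p by simp
  have "hit p \<in> {w. foldl d q w \<in> {0}}" using A unfolding eq .
  then show "p = q" using hit p q by simp
qed

lemma L1_kappa: "kappa L1 = N"
  using kappa_eq_image[OF L1_quotients L1_inj] by simp

lemma L1_no_empty: "\<not> has_empty L1"
proof
  assume "has_empty L1"
  then obtain p where p: "p < N" "{} = {w. foldl d p w \<in> {0}}" unfolding has_empty_def L1_quotients by auto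
  have A: "hit p \<in> {w. foldl d p w \<in> {0}}" using hit p by simp
  have "hit p \<in> {}" using A unfolding p(2)[symmetric] .
  then show False by simp
qed

lemma L1_suffix: "kappa (suffix_closure L1) = 2 ^ N - 1"
proof -
  define V where "V T = {y. \<exists>q\<in>T. foldl d q y = 0}" for T
  have Mx: "quot (suffix_closure L1) x = V (Img x)" for x
  proof -
    have "(\<exists>u. u @ x @ y \<in> L1) \<longleftrightarrow> (\<exists>q\<in>Img x. foldl d q y = 0)" for y
    proof
      assume "\<exists>u. u @ x @ y \<in> L1"
      then obtain u where u: "foldl d (foldl d (foldl d 0 u) x) y = 0" unfolding L1_def by auto
      have "foldl d 0 u \<in> {..<N}" using foldl_lt N2 by simp
      then have mem: "foldl d (foldl d 0 u) x \<in> Img x" unfolding Img_def by (rule imageI)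
      show "\<exists>q\<in>Img x. foldl d q y = 0" using bexI[of "\<lambda>q. foldl d q y = 0", OF u mem] .
    next
      assume "\<exists>q\<in>Img x. foldl d q y = 0"
      then obtain q where q: "q \<in> Img x" "foldl d q y = 0" ..
      from q(1) obtain p where p0: "p \<in> {..<N}" "q = foldl d p x" unfolding Img_def by (rule imageE)
      have p: "p < N" "foldl d (foldl d p x) y = 0" using p0 q(2) by auto
      from reach[OF p(1)] obtain u where "foldl d 0 u = p" ..
      then have "u @ x @ y \<in> L1" unfolding L1_def using p(2) by simp
      then show "\<exists>u. u @ x @ y \<in> L1" ..
    qed
    then show ?thesis unfolding quot_suffix_eq V_def by simp
  qed
  have Q: "quotients (suffix_closure L1) = V ` (Pow {..<N} - {{}})"
  proof -
    have "quot (suffix_closure L1) x \<in> V ` (Pow {..<N} - {{}})" for x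
    proof -
      have "Img x \<in> Pow {..<N} - {{}}" unfolding Img_def using foldl_lt N2 by (auto simp: lessThan_empty_iff)
      then show ?thesis unfolding Mx by (rule imageI)
    qed
    moreover have "V S \<in> quotients (suffix_closure L1)" if S: "S \<in> Pow {..<N} - {{}}" for S
    proof -
      have "S \<subseteq> {..<N}" "S \<noteq> {}" using S by auto
      from reach_set[OF this] obtain x where "Img x = S" ..
      then show ?thesis using quot_in[of "suffix_closure L1" x] unfolding Mx by simp
    qed
    ultimately show ?thesis by (rule quotients_eqI)
  qed
  have I0: "inj_on V (Pow {..<N})" unfolding V_def
  proof (rule inj_union)
    fix i assume i: "i \<in> {..<N}"
    have "\<forall>q\<in>{..<N}. foldl d q (hit i) = 0 \<longleftrightarrow> q = i" using hit i by auto
    then show "\<exists>y. \<forall>q\<in>{..<N}. foldl d q y = 0 \<longleftrightarrow> q = i" by (rule exI)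
  qed
  have I: "inj_on V (Pow {..<N} - {{}})" by (rule inj_on_subset[OF I0]) auto
  have "card (Pow {..<N} - {{}}) = 2 ^ N - 1" by (simp add: card_Diff_singleton card_Pow)
  then show ?thesis using kappa_eq_image[OF Q I] by simp
qed

end


definition LP :: "nat \<Rightarrow> 'a list set" where "LP k = {w. length w < k}"

lemma quot_LP: "quot (LP k) w = LP (k - length w)"
  unfolding quot_def LP_def by auto

lemma LP_quotients: "quotients (LP k :: 'a list set) = LP ` {..k}"
proof (rule quotients_eqI)
  fix x :: "'a list" show "quot (LP k) x \<in> LP ` {..k}" unfolding quot_LP by simp
next
  fix j assume "j \<in> {..k}"
  then have "quot (LP k) (replicate (k - j) (undefined::'a)) = LP j" unfolding quot_LP by simp
  then show "LP j \<in> quotients (LP k :: 'a list set)" using quot_in by metis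
qed

lemma LP_inj: "inj_on (LP :: nat \<Rightarrow> 'a list set) {..k}"
proof (rule inj_onI)
  fix i j assume eq: "(LP i :: 'a list set) = LP j"
  have *: "False" if "i < j" "(LP i :: 'a list set) = LP j" for i j
  proof -
    have "replicate i (undefined::'a) \<in> LP j" unfolding LP_def using that by simp
    then have "replicate i (undefined::'a) \<in> LP i" using that(2) by simp
    then show False unfolding LP_def by simp
  qed
  show "i = j" using *[of i j] *[of j i] eq by (cases "i < j"; cases "j < i") auto
qed

lemma LP_kappa: "kappa (LP k :: 'a list set) = Suc k"
  using kappa_eq_image[OF LP_quotients LP_inj] by simp

lemma LP_regular: "regular (LP k)"
  by (rule regular_if_finite) (simp add: LP_quotients)

lemma LP_prefix: "prefix_closure (LP k) = LP k"
proof
  show "prefix_closure (LP k) \<subseteq> LP k"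
    unfolding prefix_closure_def closure_def LP_def by (auto dest: prefix_length_le)
  show "LP k \<subseteq> prefix_closure (LP k)"
    unfolding prefix_closure_def closure_def by auto
qed

lemma subseq_set: "subseq xs ys \<Longrightarrow> set xs \<subseteq> set ys"
  by (auto elim: list_emb_set)

lemma single_quot: "quot {[]} w = (if w = [] then {[]} else {})"
  unfolding quot_def by auto

lemma single_quotients: "quotients ({[]} :: 'a list set) = {{[]}, {}}"
proof
  show "quotients ({[]} :: 'a list set) \<subseteq> {{[]}, {}}"
    unfolding quotients_def single_quot by auto
  have e1: "quot {[]} [] = ({[]} :: 'a list set)" and e2: "quot {[]} [undefined] = ({} :: 'a list set)"
    unfolding single_quot by auto
  have m1: "{[]} \<in> quotients ({[]}::'a list set)" using quot_in[of "{[]}::'a list set" "[]"] unfolding e1 .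
  have m2: "{} \<in> quotients ({[]}::'a list set)" using quot_in[of "{[]}::'a list set" "[undefined]"] unfolding e2 .
  show "{{[]}, {}} \<subseteq> quotients ({[]} :: 'a list set)" using m1 m2 by simp
qed

lemma single_subword: "subword_closure {[]} = {[]}"
  unfolding subword_closure_def closure_def by auto

lemma witness_subword2: "\<exists>L::'a list set. regular L \<and> kappa L = 2 \<and> kappa (subword_closure L) = 2"
proof -
  have k: "kappa ({[]} :: 'a list set) = 2" unfolding kappa_def single_quotients by simp
  have "regular ({[]} :: 'a list set)" by (rule regular_if_finite) (simp add: single_quotients)
  then show ?thesis using k single_subword by metis
qed

locale subaut =
  fixes A :: "'a set"
  assumes finA: "finite A" and neA: "A \<noteq> {}"
begin

definition LS :: "'a list set" where "LS = {c # w | c w. c \<in> A \<and> c \<notin> set w}"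
definition K :: "'a \<Rightarrow> 'a list set" where "K c = {y. c \<notin> set y}"

lemma quot_LS_Cons: "quot LS (c # w) = (if c \<in> A \<and> c \<notin> set w then K c else {})"
  unfolding quot_def LS_def K_def by auto

lemma LS_quotients: "quotients LS = insert LS (insert {} (K ` A))"
proof
  show "quotients LS \<subseteq> insert LS (insert {} (K ` A))"
  proof
    fix Q assume "Q \<in> quotients LS"
    then obtain w where w: "Q = quot LS w" unfolding quotients_def by auto
    show "Q \<in> insert LS (insert {} (K ` A))"
    proof (cases w)
      case Nil then show ?thesis using w by (simp add: quot_Nil)
    next
      case (Cons c w') then show ?thesis using w by (simp add: quot_LS_Cons)
    qed
  qed
  obtain c0 where c0: "c0 \<in> A" using neA by auto
  have "quot LS [] = LS" by (simp add: quot_Nil)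
  moreover have "quot LS [c0, c0] = {}" by (simp add: quot_LS_Cons)
  moreover have "quot LS [c] = K c" if "c \<in> A" for c using that by (simp add: quot_LS_Cons)
  ultimately show "insert LS (insert {} (K ` A)) \<subseteq> quotients LS" using quot_in by (metis image_subset_iff insert_subset)
qed

lemma K_inj: "inj_on K A"
proof (rule inj_onI)
  fix c d assume "K c = K d"
  moreover have "[c] \<notin> K c" unfolding K_def by simp
  ultimately have "[c] \<notin> K d" by simp
  then show "c = d" unfolding K_def by simp
qed

lemma LS_kappa: "kappa LS = card A + 2"
proof -
  have "[] \<in> K c" for c unfolding K_def by simp
  then have n1: "{} \<notin> K ` A" by auto
  obtain c0 where c0: "c0 \<in> A" using neA by auto
  have "[c0] \<in> LS" unfolding LS_def using c0 by auto
  moreover have "[] \<notin> LS" unfolding LS_def by auto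
  ultimately have n2: "LS \<notin> insert {} (K ` A)" using \<open>\<And>c. [] \<in> K c\<close> by auto
  have "card (insert LS (insert {} (K ` A))) = card (K ` A) + 2"
    using n1 n2 finA by simp
  then show ?thesis unfolding kappa_def LS_quotients using card_image[OF K_inj] by simp
qed

lemma LS_regular: "regular LS"
  by (rule regular_if_finite) (simp add: LS_quotients finA)

definition U :: "'a set \<Rightarrow> 'a list set" where "U B = {y. \<exists>d\<in>B. d \<notin> set y}"

lemma quot_W_Cons: "quot (subword_closure LS) (c # x) = U (A - set x)"
proof -
  have "(\<exists>w\<in>LS. subseq (c # x @ y) w) \<longleftrightarrow> (\<exists>d\<in>A. d \<notin> set x \<and> d \<notin> set y)" for y
  proof
    assume "\<exists>w\<in>LS. subseq (c # x @ y) w"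
    then obtain d w' where d: "d \<in> A" "d \<notin> set w'" "subseq (c # x @ y) (d # w')"
      unfolding LS_def by auto
    have "subseq (x @ y) w'"
    proof (cases "c = d")
      case True then show ?thesis using d(3) by simp
    next
      case False
      then have "subseq (c # x @ y) w'" using d(3) by simp
      then show ?thesis by (rule subseq_Cons')
    qed
    then have "set (x @ y) \<subseteq> set w'" by (rule subseq_set)
    then show "\<exists>d\<in>A. d \<notin> set x \<and> d \<notin> set y" using d by auto
  next
    assume "\<exists>d\<in>A. d \<notin> set x \<and> d \<notin> set y"
    then obtain d where d: "d \<in> A" "d \<notin> set x" "d \<notin> set y" by blast
    show "\<exists>w\<in>LS. subseq (c # x @ y) w"
    proof (cases "c = d")
      case True
      have "c # x @ y \<in> LS" unfolding LS_def using d True by auto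
      then show ?thesis by blast
    next
      case False
      have "d # c # x @ y \<in> LS" unfolding LS_def using d False by auto
      moreover have "subseq (c # x @ y) (d # c # x @ y)" by (rule list_emb_Cons) simp
      ultimately show ?thesis by blast
    qed
  qed
  then show ?thesis unfolding quot_def subword_closure_def closure_def U_def by auto
qed

lemma U_inj: "inj_on U (Pow A)"
  unfolding U_def
proof (rule inj_union)
  fix i assume i: "i \<in> A"
  obtain ys where ys: "set ys = A - {i}" using finite_list finA by blast
  have "\<forall>q\<in>A. q \<notin> set ys \<longleftrightarrow> q = i" unfolding ys by auto
  then show "\<exists>y. \<forall>q\<in>A. q \<notin> set y \<longleftrightarrow> q = i" by (rule exI)
qed

lemma W_quotients: "quotients (subword_closure LS) = insert (subword_closure LS) (U ` Pow A)"
proof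
  show "quotients (subword_closure LS) \<subseteq> insert (subword_closure LS) (U ` Pow A)"
  proof
    fix Q assume "Q \<in> quotients (subword_closure LS)"
    then obtain w where w: "Q = quot (subword_closure LS) w" unfolding quotients_def by auto
    show "Q \<in> insert (subword_closure LS) (U ` Pow A)"
    proof (cases w)
      case Nil then show ?thesis using w by (simp add: quot_Nil)
    next
      case (Cons c w')
      have "A - set w' \<in> Pow A" by auto
      then have "U (A - set w') \<in> U ` Pow A" by (rule imageI)
      then show ?thesis using w Cons by (simp add: quot_W_Cons)
    qed
  qed
  show "insert (subword_closure LS) (U ` Pow A) \<subseteq> quotients (subword_closure LS)"
  proof
    fix Q assume "Q \<in> insert (subword_closure LS) (U ` Pow A)"
    then show "Q \<in> quotients (subword_closure LS)"
    proof
      assume "Q = subword_closure LS"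
      then show ?thesis using quot_in[of "subword_closure LS" "[]"] by (simp add: quot_Nil)
    next
      assume "Q \<in> U ` Pow A"
      then obtain B where B: "B \<subseteq> A" "Q = U B" by auto
      obtain xs where xs: "set xs = A - B" using finite_list finA by blast
      have "A - set xs = B" using xs B by auto
      then have "quot (subword_closure LS) (undefined # xs) = Q" using B by (simp add: quot_W_Cons)
      then show ?thesis using quot_in by metis
    qed
  qed
qed

lemma W_kappa: "kappa (subword_closure LS) = 2 ^ card A + 1"
proof -
  obtain c0 where c0: "c0 \<in> A" using neA by auto
  obtain ys where ys: "set ys = A - {c0}" using finite_list finA by blast
  have z: "c0 # ys \<in> LS" unfolding LS_def using c0 ys by auto
  then have zW: "c0 # ys \<in> subword_closure LS" unfolding subword_closure_def closure_def by auto
  have "c0 # ys \<notin> U B" if "B \<subseteq> A" for B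
    unfolding U_def using that ys c0 by auto
  then have "subword_closure LS \<notin> U ` Pow A" using zW by auto
  then have "kappa (subword_closure LS) = card (U ` Pow A) + 1"
    unfolding kappa_def W_quotients using finA by simp
  then show ?thesis using card_image[OF U_inj] finA by (simp add: card_Pow)
qed

end


theorem theorem1:
  shows
  "(\<forall>(L::'a::finite list set) n. regular L \<and> kappa L = n \<and> n \<ge> 2 \<longrightarrow>
      kappa (prefix_closure L) \<le> n \<and>
      (\<not> has_empty L \<longrightarrow> kappa (suffix_closure L) \<le> 2^n - 1) \<and>
      (has_empty L \<longrightarrow> kappa (suffix_closure L) \<le> 2^(n-1)) \<and>
      kappa (factor_closure L) \<le> 2^(n-1) \<and>
      kappa (subword_closure L) \<le> 2^(n-2) + 1)
   \<and> (card (UNIV::'a set) \<ge> 2 \<longrightarrow> (\<forall>n\<ge>2.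
      (\<exists>L::'a list set. regular L \<and> kappa L = n \<and> kappa (prefix_closure L) = n) \<and>
      (\<exists>L::'a list set. regular L \<and> kappa L = n \<and> \<not> has_empty L \<and>
          kappa (suffix_closure L) = 2^n - 1) \<and>
      (\<exists>L::'a list set. regular L \<and> kappa L = n \<and> has_empty L \<and>
          kappa (suffix_closure L) = 2^(n-1)) \<and>
      (\<exists>L::'a list set. regular L \<and> kappa L = n \<and> kappa (factor_closure L) = 2^(n-1))))
   \<and> (\<forall>n\<ge>2. card (UNIV::'a set) \<ge> max (n-2) 2 \<longrightarrow>
      (\<exists>L::'a list set. regular L \<and> kappa L = n \<and> kappa (subword_closure L) = 2^(n-2) + 1))"
proof (intro conjI)
  show "\<forall>(L::'a::finite list set) n. regular L \<and> kappa L = n \<and> n \<ge> 2 \<longrightarrow>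
      kappa (prefix_closure L) \<le> n \<and>
      (\<not> has_empty L \<longrightarrow> kappa (suffix_closure L) \<le> 2^n - 1) \<and>
      (has_empty L \<longrightarrow> kappa (suffix_closure L) \<le> 2^(n-1)) \<and>
      kappa (factor_closure L) \<le> 2^(n-1) \<and>
      kappa (subword_closure L) \<le> 2^(n-2) + 1"
    using upper by blast
next
  show "card (UNIV::'a set) \<ge> 2 \<longrightarrow> (\<forall>n\<ge>2.
      (\<exists>L::'a list set. regular L \<and> kappa L = n \<and> kappa (prefix_closure L) = n) \<and>
      (\<exists>L::'a list set. regular L \<and> kappa L = n \<and> \<not> has_empty L \<and>
          kappa (suffix_closure L) = 2^n - 1) \<and>
      (\<exists>L::'a list set. regular L \<and> kappa L = n \<and> has_empty L \<and>
          kappa (suffix_closure L) = 2^(n-1)) \<and>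
      (\<exists>L::'a list set. regular L \<and> kappa L = n \<and> kappa (factor_closure L) = 2^(n-1)))"
  proof (intro impI allI)
    fix n :: nat
    assume c2: "card (UNIV::'a set) \<ge> 2" and n2: "n \<ge> 2"
    obtain T :: "'a set" where T: "card T = 2" using obtain_subset_with_card_n[OF c2] by metis
    then obtain a b :: 'a where ab: "a \<noteq> b" using card_2_iff by metis
    have ax1: "cycaut a b n" by unfold_locales (use ab n2 in auto)
    have ax2: "sinkaut a b (n-1)" by unfold_locales (use ab n2 in auto)
    have k2: "kappa (sinkaut.L2 a (n-1)) = n" using sinkaut.L2_kappa[OF ax2] n2 by simp
    have P: "\<exists>L::'a list set. regular L \<and> kappa L = n \<and> kappa (prefix_closure L) = n"
    proof -
      have h1: "regular (LP (n-1) :: 'a list set)" by (rule LP_regular)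
      have h2: "kappa (LP (n-1) :: 'a list set) = n" using LP_kappa[of "n-1", where 'a='a] n2 by simp
      have h3: "prefix_closure (LP (n-1) :: 'a list set) = LP (n-1)" by (rule LP_prefix)
      show ?thesis using h1 h2 h3 by (intro exI[of _ "LP (n-1) :: 'a list set"]) simp
    qed
    have S1: "\<exists>L::'a list set. regular L \<and> kappa L = n \<and> \<not> has_empty L \<and> kappa (suffix_closure L) = 2^n - 1"
      using cycaut.L1_regular[OF ax1] cycaut.L1_kappa[OF ax1] cycaut.L1_no_empty[OF ax1] cycaut.L1_suffix[OF ax1]
      by blast
    have S2: "\<exists>L::'a list set. regular L \<and> kappa L = n \<and> has_empty L \<and> kappa (suffix_closure L) = 2^(n-1)"
      using sinkaut.L2_regular[OF ax2] k2 sinkaut.L2_has_empty[OF ax2] sinkaut.L2_suffix[OF ax2]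
      by blast
    have F: "\<exists>L::'a list set. regular L \<and> kappa L = n \<and> kappa (factor_closure L) = 2^(n-1)"
      using sinkaut.L2_regular[OF ax2] k2 sinkaut.L2_factor[OF ax2]
      by blast
    show "(\<exists>L::'a list set. regular L \<and> kappa L = n \<and> kappa (prefix_closure L) = n) \<and>
      (\<exists>L::'a list set. regular L \<and> kappa L = n \<and> \<not> has_empty L \<and>
          kappa (suffix_closure L) = 2^n - 1) \<and>
      (\<exists>L::'a list set. regular L \<and> kappa L = n \<and> has_empty L \<and>
          kappa (suffix_closure L) = 2^(n-1)) \<and>
      (\<exists>L::'a list set. regular L \<and> kappa L = n \<and> kappa (factor_closure L) = 2^(n-1))"
      using P S1 S2 F by (intro conjI)
  qed
next
  show "\<forall>n\<ge>2. card (UNIV::'a set) \<ge> max (n-2) 2 \<longrightarrow>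
      (\<exists>L::'a list set. regular L \<and> kappa L = n \<and> kappa (subword_closure L) = 2^(n-2) + 1)"
  proof (intro allI impI)
    fix n :: nat
    assume n2: "n \<ge> 2" and c: "card (UNIV::'a set) \<ge> max (n-2) 2"
    show "\<exists>L::'a list set. regular L \<and> kappa L = n \<and> kappa (subword_closure L) = 2^(n-2) + 1"
    proof (cases "n = 2")
      case True
      have e: "(2::nat)^(n-2) + 1 = 2" using True by simp
      show ?thesis unfolding e using witness_subword2[where 'a='a] True by simp
    next
      case False
      have "n - 2 \<le> card (UNIV::'a set)" using c by simp
      then obtain A :: "'a set" where A: "card A = n - 2" "finite A" using obtain_subset_with_card_n by metis
      have "A \<noteq> {}" using A False n2 by auto
      then have ax: "subaut A" by unfold_locales (use A in auto)
      have k: "kappa (subaut.LS A) = n" using subaut.LS_kappa[OF ax] A n2 by simp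
      have w: "kappa (subword_closure (subaut.LS A)) = 2^(n-2) + 1" using subaut.W_kappa[OF ax] A(1) by simp
      show ?thesis using subaut.LS_regular[OF ax] k w by (intro exI[of _ "subaut.LS A"] conjI)
    qed
  qed
qed

end
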